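(* Consider the lift $\varphi\colon\mathrm{S}^{n-1}\to\Delta^{n-1}$, $\varphi(y)=y\odot y$ (entrywise square). It satisfies "local $\Rightarrow$ local" at every point, satisfies "1 $\Rightarrow$ 1" at $y$ if and only if $y_i\neq0$ for all $i$, and satisfies "2 $\Rightarrow$ 1" at every point.
   Context: $\mathrm{S}^{n-1}$ is the unit sphere in $\mathbb{R}^n$ and $\Delta^{n-1}=\{x\in\mathbb{R}^n: x\ge0,\ \sum_i x_i=1\}$. General setting: for a smooth manifold $\mathcal{M}$ and smooth $\varphi\colon\mathcal{M}\to\mathcal{E}$ with image $\mathcal{X}$, and a cost $f$, set $g=f\circ\varphi$. Tangent cone: $\mathrm{T}_x\mathcal{X}=\{\lim (x_i-x)/\tau_i: x_i\in\mathcal{X},\tau_i>0,\tau_i\to0\}$; $K^*=\{u:\langle u,v\rangle\ge0\ \forall v\in K\}$; $x$ is stationary for $f$ on $\mathcal{X}$ if $\nabla f(x)\in(\mathrm{T}_x\mathcal{X})^*$. $y$ is 1-critical for $g$ if $(g\circ c)'(0)=0$ for all smooth curves $c$ in $\mathcal{M}$ with $c(0)=y$, and 2-critical if moreover $(g\circ c)''(0)\ge0$ for all such curves. "local $\Rightarrow$ local" at $y$: for every continuous $f\colon\mathcal{X}\to\mathbb{R}$, if $y$ is a local minimum of $g$ then $\varphi(y)$ is a local minimum of $f$ on $\mathcal{X}$. "$k\Rightarrow1$" at $y$ ($k=1,2$): for every $k$-times differentiable $f\colon\mathcal{E}\to\mathbb{R}$, if $y$ is $k$-critical for $g$ then $\varphi(y)$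 is stationary for $f$ on $\mathcal{X}$. *)

theory Defs
  imports "HOL-Analysis.Analysis"
begin

definition smooth_curve :: "(real \<Rightarrow> 'a::real_normed_vector) \<Rightarrow> bool" where
  "smooth_curve c \<longleftrightarrow>
     (\<exists>D :: nat \<Rightarrow> real \<Rightarrow> 'a. D 0 = c \<and> (\<forall>k t. (D k has_vector_derivative D (Suc k) t) (at t)))"

definition crit1 :: "'m::real_normed_vector set \<Rightarrow> ('m \<Rightarrow> real) \<Rightarrow> 'm \<Rightarrow> bool" where
  "crit1 M g y \<longleftrightarrow>
     (\<forall>c. smooth_curve c \<and> (\<forall>t. c t \<in> M) \<and> c 0 = y \<longrightarrow> deriv (g \<circ> c) 0 = 0)"

definition crit2 :: "'m::real_normed_vector set \<Rightarrow> ('m \<Rightarrow> real) \<Rightarrow> 'm \<Rightarrow> bool" where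
  "crit2 M g y \<longleftrightarrow> crit1 M g y \<and>
     (\<forall>c. smooth_curve c \<and> (\<forall>t. c t \<in> M) \<and> c 0 = y \<longrightarrow> deriv (deriv (g \<circ> c)) 0 \<ge> 0)"

definition local_min_on :: "'a::metric_space set \<Rightarrow> ('a \<Rightarrow> real) \<Rightarrow> 'a \<Rightarrow> bool" where
  "local_min_on S h x \<longleftrightarrow> x \<in> S \<and> (\<exists>e>0. \<forall>z\<in>S. dist z x < e \<longrightarrow> h x \<le> h z)"

definition tangent_cone :: "'a::real_normed_vector set \<Rightarrow> 'a \<Rightarrow> 'a set" where
  "tangent_cone X x = {v. \<exists>xs :: nat \<Rightarrow> 'a. \<exists>\<tau> :: nat \<Rightarrow> real.
      (\<forall>i. xs i \<in> X) \<and> (\<forall>i. \<tau> i > 0) \<and> \<tau> \<longlonglongrightarrow> 0 \<and>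
      (\<lambda>i. (xs i - x) /\<^sub>R \<tau> i) \<longlonglongrightarrow> v}"

definition dual_cone :: "'a::real_inner set \<Rightarrow> 'a set" where
  "dual_cone K = {u. \<forall>v\<in>K. inner u v \<ge> 0}"

definition stationary_on :: "'e::real_inner set \<Rightarrow> ('e \<Rightarrow> real) \<Rightarrow> 'e \<Rightarrow> bool" where
  "stationary_on X f x \<longleftrightarrow>
     (\<exists>gr. (f has_derivative (\<lambda>v. inner gr v)) (at x) \<and> gr \<in> dual_cone (tangent_cone X x))"

definition diff1 :: "('e::real_normed_vector \<Rightarrow> real) \<Rightarrow> bool" where
  "diff1 f \<longleftrightarrow> (\<forall>x. f differentiable (at x))"

definition diff2 :: "('e::real_normed_vector \<Rightarrow> real) \<Rightarrow> bool" where
  "diff2 f \<longleftrightarrow> (\<exists>Df :: 'e \<Rightarrow> ('e \<Rightarrow>\<^sub>L real).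
      (\<forall>x. (f has_derivative blinfun_apply (Df x)) (at x)) \<and> (\<forall>x. Df differentiable (at x)))"

definition local_local :: "'m::real_normed_vector set \<Rightarrow> ('m \<Rightarrow> 'e::real_inner) \<Rightarrow> 'm \<Rightarrow> bool" where
  "local_local M \<phi> y \<longleftrightarrow>
     (\<forall>f :: 'e \<Rightarrow> real. continuous_on (\<phi> ` M) f \<longrightarrow>
        local_min_on M (f \<circ> \<phi>) y \<longrightarrow> local_min_on (\<phi> ` M) f (\<phi> y))"

definition one_one :: "'m::real_normed_vector set \<Rightarrow> ('m \<Rightarrow> 'e::real_inner) \<Rightarrow> 'm \<Rightarrow> bool" where
  "one_one M \<phi> y \<longleftrightarrow>
     (\<forall>f :: 'e \<Rightarrow> real. diff1 f \<longrightarrow> crit1 M (f \<circ> \<phi>) y \<longrightarrow> stationary_on (\<phi> ` M) f (\<phi> y))"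

definition two_one :: "'m::real_normed_vector set \<Rightarrow> ('m \<Rightarrow> 'e::real_inner) \<Rightarrow> 'm \<Rightarrow> bool" where
  "two_one M \<phi> y \<longleftrightarrow>
     (\<forall>f :: 'e \<Rightarrow> real. diff2 f \<longrightarrow> crit2 M (f \<circ> \<phi>) y \<longrightarrow> stationary_on (\<phi> ` M) f (\<phi> y))"

definition std_simplex :: "(real ^ 'n) set" where
  "std_simplex = {x. (\<forall>i. x $ i \<ge> 0) \<and> (\<Sum>i\<in>UNIV. x $ i) = 1}"

definition sq_lift :: "real ^ 'n \<Rightarrow> real ^ 'n" where
  "sq_lift y = (\<chi> i. (y $ i) * (y $ i))"

end

theory Submission
  imports Defs
begin

lemma sphere_iff: "(z::real^'n) \<in> sphere 0 1 \<longleftrightarrow> inner z z = 1"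
  by (simp add: norm_eq_sqrt_inner)

lemma lin_grad:
  fixes L :: "real^'n \<Rightarrow> real"
  assumes "linear L"
  shows "L = inner (\<chi> i. L (axis i 1))"
proof
  fix v :: "real^'n"
  have "L v = L (\<Sum>i\<in>UNIV. v$i *\<^sub>R axis i 1)"
    using basis_expansion[of v] by (simp add: scalar_mult_eq_scaleR)
  also have "\<dots> = (\<Sum>i\<in>UNIV. v$i * L (axis i 1))"
    using assms by (simp add: linear_sum linear_scale)
  also have "\<dots> = inner (\<chi> i. L (axis i 1)) v"
    by (simp add: inner_vec_def mult.commute)
  finally show "L v = inner (\<chi> i. L (axis i 1)) v" .
qed

lemma circle_curve:
  fixes y w :: "real^'n"
  assumes "inner y y = 1" "inner w w = 1" "inner y w = 0"
  defines "c \<equiv> \<lambda>t. cos t *\<^sub>R y + sin t *\<^sub>R w"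
  shows "smooth_curve c" "\<forall>t. c t \<in> sphere 0 1" "c 0 = y"
proof -
  define D where "D = (\<lambda>k::nat. \<lambda>t. cos (t + real k * pi/2) *\<^sub>R y + sin (t + real k * pi/2) *\<^sub>R w)"
  have "D 0 = c" by (simp add: D_def c_def)
  moreover have "(D k has_vector_derivative D (Suc k) t) (at t)" for k t
  proof -
    have e0: "t + real (Suc k) * pi/2 = (t + real k * pi/2) + pi/2"
      by (simp add: field_simps)
    have e1: "cos (t + real (Suc k) * pi/2) = - sin (t + real k * pi/2)"
      unfolding e0 cos_add by simp
    have e2: "sin (t + real (Suc k) * pi/2) = cos (t + real k * pi/2)"
      unfolding e0 sin_add by simp
    show ?thesis unfolding D_def e1 e2
      by (auto intro!: derivative_eq_intros)
  qed
  ultimately show "smooth_curve c" unfolding smooth_curve_def by blast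
  show "\<forall>t. c t \<in> sphere 0 1"
  proof
    fix t
    have "inner (c t) (c t) = (cos t)^2 * inner y y + (sin t)^2 * inner w w + 2 * cos t * sin t * inner y w"
      by (simp add: c_def inner_add_left inner_add_right inner_commute power2_eq_square algebra_simps)
    also have "\<dots> = 1" using assms(1-3) by simp
    finally show "c t \<in> sphere 0 1" unfolding sphere_iff .
  qed
  show "c 0 = y" by (simp add: c_def)
qed

lemma crit1_orth:
  fixes y w gr :: "real^'n" and f :: "real^'n \<Rightarrow> real"
  assumes y: "y \<in> sphere 0 1" and fd: "(f has_derivative inner gr) (at (sq_lift y))"
    and cr: "crit1 (sphere 0 1) (f \<circ> sq_lift) y"
    and orth: "inner y w = 0" and wnz: "w \<noteq> 0"
  shows "inner gr (\<chi> j. y$j * w$j) = 0"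
proof -
  define u where "u = w /\<^sub>R norm w"
  have yy: "inner y y = 1" using y sphere_iff by blast
  have uu: "inner u u = 1" using wnz by (simp add: u_def inner_commute power2_norm_eq_inner[symmetric])
  have yu: "inner y u = 0" using orth by (simp add: u_def)
  define c where "c = (\<lambda>t. cos t *\<^sub>R y + sin t *\<^sub>R u)"
  have cc: "smooth_curve c" "\<forall>t. c t \<in> sphere 0 1" "c 0 = y"
    using circle_curve[OF yy uu yu] by (simp_all add: c_def)
  have d0: "deriv ((f \<circ> sq_lift) \<circ> c) 0 = 0" using cr cc unfolding crit1_def by blast
  define x where "x = sq_lift y"
  define p where "p = (\<lambda>t. (cos t)^2 *\<^sub>R x + (sin t)^2 *\<^sub>R (\<chi> j. u$j*u$j) + (2 * sin t * cos t) *\<^sub>R (\<chi> j. y$j*u$j))"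
  have pc: "sq_lift \<circ> c = p"
    by (rule ext) (simp add: vec_eq_iff c_def p_def x_def sq_lift_def power2_eq_square algebra_simps)
  have "(p has_vector_derivative 2 *\<^sub>R (\<chi> j. y$j*u$j)) (at 0)"
    unfolding p_def by (auto intro!: derivative_eq_intros)
  hence pd: "(p has_derivative (\<lambda>h. h *\<^sub>R (2 *\<^sub>R (\<chi> j. y$j*u$j)))) (at 0)"
    by (simp add: has_vector_derivative_def)
  have p0: "p 0 = sq_lift y" by (simp add: p_def x_def)
  have "((f \<circ> p) has_derivative (inner gr \<circ> (\<lambda>h. h *\<^sub>R (2 *\<^sub>R (\<chi> j. y$j*u$j))))) (at 0)"
    by (rule diff_chain_at[OF pd]) (simp add: p0 fd)
  hence "((f \<circ> p) has_real_derivative (2 * inner gr (\<chi> j. y$j*u$j))) (at 0)"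
    unfolding has_field_derivative_def by (rule has_derivative_eq_rhs) (auto simp: o_def)
  hence "deriv (f \<circ> p) 0 = 2 * inner gr (\<chi> j. y$j*u$j)" by (rule DERIV_imp_deriv)
  moreover have "(f \<circ> sq_lift) \<circ> c = f \<circ> p" using pc by (metis comp_assoc)
  ultimately have "inner gr (\<chi> j. y$j*u$j) = 0" using d0 by simp
  moreover have "(\<chi> j. y$j*u$j) = (1 / norm w) *\<^sub>R (\<chi> j. y$j*w$j)"
    by (simp add: vec_eq_iff u_def field_simps)
  ultimately show ?thesis using wnz by simp
qed

lemma crit1_eq:
  fixes y gr :: "real^'n" and f :: "real^'n \<Rightarrow> real"
  assumes y: "y \<in> sphere 0 1" and fd: "(f has_derivative inner gr) (at (sq_lift y))"
    and cr: "crit1 (sphere 0 1) (f \<circ> sq_lift) y"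
    and i: "y$i \<noteq> 0" and k: "y$k \<noteq> 0"
  shows "gr$i = gr$k"
proof (cases "i = k")
  case False
  define w where "w = axis i (y$k) - axis k (y$i)"
  have "inner y w = 0" by (simp add: w_def inner_diff_right inner_axis mult.commute)
  moreover have "w \<noteq> 0" using False k by (auto simp: w_def vec_eq_iff axis_def)
  ultimately have h1: "inner gr (\<chi> j. y$j * w$j) = 0" using crit1_orth[OF y fd cr] by blast
  have h2: "(\<chi> j. y$j * w$j) = axis i (y$i * y$k) - axis k (y$k * y$i)"
    using False by (auto simp: w_def vec_eq_iff axis_def)
  have "inner gr (axis i (y$i * y$k) - axis k (y$k * y$i)) = 0" using h1 h2 by metis
  then have "y$i * y$k * (gr$i - gr$k) = 0"
    by (simp add: inner_diff_right inner_axis algebra_simps)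
  thus ?thesis using i k by simp
qed simp

lemma sum_axis: "(\<Sum>i\<in>UNIV. axis j (1::real) $ i) = 1"
  by (simp add: axis_def)

lemma tc_sub:
  fixes x v :: "real^'n"
  assumes x: "x \<in> std_simplex" and v: "v \<in> tangent_cone std_simplex x"
  shows "(\<Sum>i\<in>UNIV. v$i) = 0" "\<And>j. x$j = 0 \<Longrightarrow> v$j \<ge> 0"
proof -
  obtain xs \<tau> where xs: "\<forall>i. xs i \<in> std_simplex" and tp: "\<forall>i. \<tau> i > 0"
    and lim: "(\<lambda>i. (xs i - x) /\<^sub>R \<tau> i) \<longlonglongrightarrow> v"
    using v unfolding tangent_cone_def by blast
  have comp: "(\<lambda>k. ((xs k - x) /\<^sub>R \<tau> k) $ j) \<longlonglongrightarrow> v $ j" for j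
    using lim by (rule tendsto_vec_nth)
  have "(\<lambda>k. \<Sum>j\<in>UNIV. ((xs k - x) /\<^sub>R \<tau> k) $ j) \<longlonglongrightarrow> (\<Sum>j\<in>UNIV. v $ j)"
    by (rule tendsto_sum) (rule comp)
  moreover have "(\<Sum>j\<in>UNIV. ((xs k - x) /\<^sub>R \<tau> k) $ j) = 0" for k
  proof -
    have "(\<Sum>j\<in>UNIV. ((xs k - x) /\<^sub>R \<tau> k) $ j) = inverse (\<tau> k) * ((\<Sum>j\<in>UNIV. xs k $ j) - (\<Sum>j\<in>UNIV. x $ j))"
      by (simp add: sum_distrib_left[symmetric] sum_subtractf)
    also have "\<dots> = 0" using xs x by (simp add: std_simplex_def)
    finally show ?thesis .
  qed
  ultimately have "(\<lambda>k::nat. 0::real) \<longlonglongrightarrow> (\<Sum>j\<in>UNIV. v $ j)" by simp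
  then show "(\<Sum>i\<in>UNIV. v$i) = 0" by (simp add: LIMSEQ_const_iff)
  fix j assume xj: "x$j = 0"
  have "\<forall>k. 0 \<le> ((xs k - x) /\<^sub>R \<tau> k) $ j"
    using xs tp xj by (simp add: std_simplex_def less_imp_le)
  then show "v$j \<ge> 0" using comp[of j] by (meson LIMSEQ_le_const)
qed

lemma tc_in:
  fixes x :: "real^'n"
  assumes x: "x \<in> std_simplex"
  shows "axis j 1 - x \<in> tangent_cone std_simplex x"
proof -
  define \<tau> where "\<tau> = (\<lambda>k::nat. inverse (real (Suc k)))"
  define xs where "xs = (\<lambda>k. x + \<tau> k *\<^sub>R (axis j 1 - x))"
  have tp: "\<forall>k. \<tau> k > 0" by (simp add: \<tau>_def)
  have t1: "\<tau> k \<le> 1" for k by (simp add: \<tau>_def inverse_le_1_iff)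
  have tl: "\<tau> \<longlonglongrightarrow> 0" unfolding \<tau>_def by (rule LIMSEQ_inverse_real_of_nat)
  have xss: "\<forall>k. xs k \<in> std_simplex"
  proof
    fix k
    have "xs k $ i \<ge> 0" for i
    proof -
      have "xs k $ i = (1 - \<tau> k) * x $ i + \<tau> k * axis j 1 $ i" by (simp add: xs_def algebra_simps)
      moreover have "x $ i \<ge> 0" using x by (simp add: std_simplex_def)
      moreover have "axis j (1::real) $ i \<ge> 0" by (simp add: axis_def)
      moreover have "0 \<le> 1 - \<tau> k" "0 \<le> \<tau> k" using t1[of k] tp less_imp_le by auto
      ultimately show ?thesis by simp
    qed
    moreover have "(\<Sum>i\<in>UNIV. xs k $ i) = 1"
    proof -
      have "(\<Sum>i\<in>UNIV. xs k $ i) = (\<Sum>i\<in>UNIV. x$i) + \<tau> k * ((\<Sum>i\<in>UNIV. axis j 1 $ i) - (\<Sum>i\<in>UNIV. x$i))"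
        by (simp add: xs_def sum.distrib sum_distrib_left sum_subtractf right_diff_distrib)
      then show ?thesis using x by (simp only: sum_axis) (simp add: std_simplex_def)
    qed
    ultimately show "xs k \<in> std_simplex" by (simp add: std_simplex_def)
  qed
  have qe: "(\<lambda>k. (xs k - x) /\<^sub>R \<tau> k) = (\<lambda>k. axis j 1 - x)"
  proof (rule ext)
    fix k
    have "\<tau> k \<noteq> 0" using tp by (metis less_irrefl)
    then show "(xs k - x) /\<^sub>R \<tau> k = axis j 1 - x" by (simp add: xs_def)
  qed
  show ?thesis unfolding tangent_cone_def
    by (intro CollectI exI[of _ xs] exI[of _ \<tau>]) (simp add: tp tl xss qe)
qed

lemma image_eq: "sq_lift ` (sphere 0 1 :: (real ^ 'n) set) = std_simplex"
proof
  show "sq_lift ` sphere 0 1 \<subseteq> (std_simplex :: (real^'n) set)"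
  proof
    fix z :: "real^'n" assume "z \<in> sq_lift ` sphere 0 1"
    then obtain y where y: "y \<in> sphere 0 1" and z: "z = sq_lift y" by blast
    have "inner y y = 1" using y sphere_iff by blast
    then show "z \<in> std_simplex" by (simp add: z std_simplex_def sq_lift_def inner_vec_def)
  qed
  show "(std_simplex :: (real^'n) set) \<subseteq> sq_lift ` sphere 0 1"
  proof
    fix x :: "real^'n" assume x: "x \<in> std_simplex"
    define y where "y = (\<chi> i. sqrt (x$i) :: real^'n)"
    have nn: "x$i \<ge> 0" for i using x by (simp add: std_simplex_def)
    have "sq_lift y = x" using nn by (simp add: vec_eq_iff y_def sq_lift_def)
    moreover have "inner y y = 1" using nn x by (simp add: y_def inner_vec_def std_simplex_def)
    ultimately show "x \<in> sq_lift ` sphere 0 1" using sphere_iff by blast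
  qed
qed

lemma grad_of_diff:
  fixes f :: "real^'n \<Rightarrow> real"
  assumes "(f has_derivative D) (at x)"
  shows "\<exists>gr. (f has_derivative inner gr) (at x) \<and> D = inner gr"
proof -
  have e: "D = inner (\<chi> i. D (axis i 1))" by (rule lin_grad[OF has_derivative_linear[OF assms]])
  from assms have "(f has_derivative inner (\<chi> i. D (axis i 1))) (at x)" by (subst e[symmetric])
  with e show ?thesis by blast
qed

lemma one_one_nonzero:
  fixes y :: "real^'n"
  assumes y: "y \<in> sphere 0 1" and nz: "\<forall>i. y$i \<noteq> 0"
  shows "one_one (sphere 0 1) sq_lift y"
  unfolding one_one_def
proof (intro allI impI)
  fix f :: "real^'n \<Rightarrow> real"
  assume d1: "diff1 f" and cr: "crit1 (sphere 0 1) (f \<circ> sq_lift) y"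
  obtain D where "(f has_derivative D) (at (sq_lift y))" using d1 unfolding diff1_def differentiable_def by blast
  then obtain gr where fd: "(f has_derivative inner gr) (at (sq_lift y))" using grad_of_diff by blast
  obtain k :: 'n where True by blast
  have eq: "gr$i = gr$k" for i using crit1_eq[OF y fd cr] nz by blast
  have xs: "sq_lift y \<in> std_simplex" using y image_eq by blast
  have "gr \<in> dual_cone (tangent_cone std_simplex (sq_lift y))"
    unfolding dual_cone_def
  proof (rule CollectI, rule ballI)
    fix v assume v: "v \<in> tangent_cone std_simplex (sq_lift y)"
    have "inner gr v = (\<Sum>i\<in>UNIV. gr$k * v$i)" unfolding inner_vec_def inner_real_def
      using eq by (intro sum.cong) auto
    also have "\<dots> = gr$k * (\<Sum>i\<in>UNIV. v$i)" by (simp add: sum_distrib_left)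
    also have "\<dots> = 0" using tc_sub(1)[OF xs v] by simp
    finally show "inner gr v \<ge> 0" by simp
  qed
  then show "stationary_on (sq_lift ` sphere 0 1) f (sq_lift y)"
    unfolding stationary_on_def image_eq using fd by blast
qed

lemma one_one_zero:
  fixes y :: "real^'n"
  assumes y: "y \<in> sphere 0 1" and oo: "one_one (sphere 0 1) sq_lift y"
  shows "y$j \<noteq> 0"
proof
  assume yj: "y$j = 0"
  define f where "f = (\<lambda>z::real^'n. - (z$j))"
  have bl: "bounded_linear f" unfolding f_def by (intro bounded_linear_minus bounded_linear_vec_nth)
  have fd: "(f has_derivative f) (at z)" for z using bl by (rule bounded_linear_imp_has_derivative)
  have d1: "diff1 f" unfolding diff1_def differentiable_def using fd by blast
  have cr: "crit1 (sphere 0 1) (f \<circ> sq_lift) y"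
    unfolding crit1_def
  proof (intro allI impI)
    fix c :: "real \<Rightarrow> real^'n"
    assume "smooth_curve c \<and> (\<forall>t. c t \<in> sphere 0 1) \<and> c 0 = y"
    then obtain D where D0: "D 0 = c" and Dd: "\<And>k t. (D k has_vector_derivative D (Suc k) t) (at t)"
      and c0: "c 0 = y" unfolding smooth_curve_def by blast
    have "(c has_derivative (\<lambda>h. h *\<^sub>R D 1 0)) (at 0)"
      using Dd[of 0 0] D0 by (simp add: has_vector_derivative_def)
    then have "((\<lambda>t. c t $ j) has_derivative (\<lambda>h. (h *\<^sub>R D 1 0) $ j)) (at 0)"
      by (rule bounded_linear.has_derivative[OF bounded_linear_vec_nth])
    then have cj: "((\<lambda>t. c t $ j) has_real_derivative (D 1 0 $ j)) (at 0)"
      unfolding has_field_derivative_def by (rule has_derivative_eq_rhs) (auto simp: mult.commute)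
    have "((\<lambda>t. - (c t $ j * c t $ j)) has_real_derivative - (D 1 0 $ j * c 0 $ j + D 1 0 $ j * c 0 $ j)) (at 0)"
      by (intro DERIV_minus DERIV_mult cj)
    then have "((\<lambda>t. - (c t $ j * c t $ j)) has_real_derivative 0) (at 0)" using c0 yj by simp
    moreover have "(f \<circ> sq_lift) \<circ> c = (\<lambda>t. - (c t $ j * c t $ j))"
      by (simp add: f_def sq_lift_def o_def)
    ultimately show "deriv ((f \<circ> sq_lift) \<circ> c) 0 = 0" by (simp add: DERIV_imp_deriv)
  qed
  have "stationary_on (sq_lift ` sphere 0 1) f (sq_lift y)" using oo d1 cr unfolding one_one_def by blast
  then obtain gr where g1: "(f has_derivative inner gr) (at (sq_lift y))"
    and g2: "gr \<in> dual_cone (tangent_cone std_simplex (sq_lift y))"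
    unfolding stationary_on_def image_eq by blast
  have fg: "f = inner gr" using has_derivative_unique[OF fd g1] .
  have xs: "sq_lift y \<in> std_simplex" using y image_eq by blast
  have "axis j 1 - sq_lift y \<in> tangent_cone std_simplex (sq_lift y)" by (rule tc_in[OF xs])
  then have "inner gr (axis j 1 - sq_lift y) \<ge> 0" using g2 unfolding dual_cone_def by blast
  moreover have "inner gr (axis j 1 - sq_lift y) = -1"
    using fg[symmetric] yj by (simp add: f_def sq_lift_def)
  ultimately show False by simp
qed

lemma sqrt_diff_sq:
  fixes a b :: real
  assumes "a \<ge> 0" "b \<ge> 0"
  shows "(sqrt a - sqrt b)^2 \<le> \<bar>a - b\<bar>"
proof -
  have sa: "sqrt a * sqrt a = a" and sb: "sqrt b * sqrt b = b" using assms by simp_all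
  have "(sqrt a - sqrt b)^2 = a + b - 2 * (sqrt a * sqrt b)"
    using sa sb by (simp add: power2_eq_square algebra_simps)
  moreover have "sqrt a * sqrt b \<ge> min a b"
  proof (cases "a \<le> b")
    case True
    then have "sqrt a \<le> sqrt b" by simp
    then have "sqrt a * sqrt a \<le> sqrt a * sqrt b" using assms by (intro mult_left_mono) simp_all
    then show ?thesis using True assms by (simp add: min_def)
  next
    case False
    then have "sqrt b \<le> sqrt a" by simp
    then have "sqrt b * sqrt b \<le> sqrt a * sqrt b" using assms by (intro mult_right_mono) simp_all
    then show ?thesis using False assms by (simp add: min_def)
  qed
  ultimately show ?thesis by (cases "a \<le> b") auto
qed

lemma local_local_all:
  fixes y :: "real^'n"
  assumes y: "y \<in> sphere 0 1"
  shows "local_local (sphere 0 1) sq_lift y"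
  unfolding local_local_def
proof (intro allI impI)
  fix f :: "real^'n \<Rightarrow> real"
  assume lm: "local_min_on (sphere 0 1) (f \<circ> sq_lift) y"
  then obtain e where e: "e > 0" and le: "\<forall>z\<in>sphere 0 1. dist z y < e \<longrightarrow> f (sq_lift y) \<le> f (sq_lift z)"
    unfolding local_min_on_def by auto
  define x where "x = sq_lift y"
  define N where "N = real CARD('n)"
  have Npos: "N > 0" by (simp add: N_def)
  define d where "d = e^2 / N"
  have dpos: "d > 0" using e Npos by (simp add: d_def)
  have "\<forall>z\<in>std_simplex. dist z x < d \<longrightarrow> f x \<le> f z"
  proof (intro ballI impI)
    fix z :: "real^'n" assume zs: "z \<in> std_simplex" and dz: "dist z x < d"
    have znn: "z$i \<ge> 0" for i using zs by (simp add: std_simplex_def)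
    define w where "w = (\<chi> i. if y$i \<ge> 0 then sqrt (z$i) else - sqrt (z$i))"
    have sw: "sq_lift w = z" using znn by (simp add: vec_eq_iff w_def sq_lift_def)
    have "inner w w = (\<Sum>i\<in>UNIV. z$i)" unfolding inner_vec_def inner_real_def
      by (intro sum.cong) (auto simp: w_def znn)
    then have "inner w w = 1" using zs by (simp add: std_simplex_def)
    then have ws: "w \<in> sphere 0 1" using sphere_iff by blast
    have comp: "((w - y)$i)^2 \<le> dist z x" for i
    proof -
      have xi: "x$i = y$i * y$i" by (simp add: x_def sq_lift_def)
      have ay: "\<bar>y$i\<bar> = sqrt (x$i)" by (simp add: xi real_sqrt_mult_self)
      have "((w - y)$i)^2 = (sqrt (z$i) - \<bar>y$i\<bar>)^2"
        by (cases "y$i \<ge> 0") (auto simp: w_def power2_eq_square algebra_simps)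
      also have "\<dots> \<le> \<bar>z$i - x$i\<bar>" unfolding ay by (rule sqrt_diff_sq[OF znn]) (simp add: xi)
      also have "\<dots> = \<bar>(z - x)$i\<bar>" by simp
      also have "\<dots> \<le> norm (z - x)" by (rule component_le_norm_cart)
      finally show ?thesis by (simp add: dist_norm)
    qed
    have "(dist w y)^2 = (\<Sum>i\<in>UNIV. ((w - y)$i)^2)"
      unfolding dist_norm power2_norm_eq_inner by (simp add: inner_vec_def power2_eq_square)
    also have "\<dots> \<le> (\<Sum>i\<in>(UNIV::'n set). dist z x)" by (rule sum_mono) (rule comp)
    also have "\<dots> = N * dist z x" by (simp add: N_def)
    also have "\<dots> < N * d" using dz Npos by simp
    also have "\<dots> = e^2" using Npos by (simp add: d_def)
    finally have "dist w y < e" using e by (simp add: power_less_imp_less_base)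
    then have "f (sq_lift y) \<le> f (sq_lift w)" using le ws by blast
    then show "f x \<le> f z" using sw by (simp add: x_def)
  qed
  moreover have "x \<in> sq_lift ` sphere 0 1" using y by (simp add: x_def)
  ultimately show "local_min_on (sq_lift ` sphere 0 1) f (sq_lift y)"
    unfolding local_min_on_def image_eq x_def using dpos by (auto simp: image_eq)
qed

lemma second_order:
  fixes y :: "real^'n" and f :: "real^'n \<Rightarrow> real" and Df :: "(real^'n) \<Rightarrow> ((real^'n) \<Rightarrow>\<^sub>L real)"
  assumes y: "y \<in> sphere 0 1" and yj: "y$j = 0"
    and fD: "\<forall>x. (f has_derivative blinfun_apply (Df x)) (at x)"
    and Dd: "\<forall>x. Df differentiable (at x)"
    and cr: "crit2 (sphere 0 1) (f \<circ> sq_lift) y"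
  shows "blinfun_apply (Df (sq_lift y)) (axis j 1 - sq_lift y) \<ge> 0"
proof -
  define x where "x = sq_lift y"
  define d where "d = axis j 1 - x"
  define q where "q = (\<lambda>t. x + (sin t)^2 *\<^sub>R d)"
  define c where "c = (\<lambda>t. cos t *\<^sub>R y + sin t *\<^sub>R (axis j 1 :: real^'n))"
  define k where "k = (\<lambda>t. blinfun_apply (Df (q t)) d)"
  have yy: "inner y y = 1" using y sphere_iff by blast
  have ee: "inner (axis j 1 :: real^'n) (axis j 1) = 1" by (simp add: inner_axis_axis)
  have ye: "inner y (axis j 1) = 0" using yj by (simp add: inner_axis)
  have cc: "smooth_curve c" "\<forall>t. c t \<in> sphere 0 1" "c 0 = y"
    using circle_curve[OF yy ee ye] by (simp_all add: c_def)
  have cq: "sq_lift \<circ> c = q"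
  proof (rule ext)
    fix t :: real
    have cs: "(cos t)^2 = 1 - (sin t)^2" using sin_cos_squared_add[of t] by linarith
    show "(sq_lift \<circ> c) t = q t"
      unfolding vec_eq_iff
    proof
      fix i
      show "(sq_lift \<circ> c) t $ i = q t $ i"
      proof (cases "i = j")
        case True
        then show ?thesis using yj
          by (simp add: c_def q_def d_def x_def sq_lift_def power2_eq_square)
      next
        case False
        then have "(sq_lift \<circ> c) t $ i = (cos t)^2 * (y$i * y$i)"
          by (simp add: c_def sq_lift_def axis_def power2_eq_square)
        also have "\<dots> = q t $ i" using False
          by (simp add: cs q_def d_def x_def sq_lift_def axis_def algebra_simps)
        finally show ?thesis .
      qed
    qed
  qed
  have hc: "(f \<circ> sq_lift) \<circ> c = f \<circ> q" using cq by (metis comp_assoc)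
  have sd: "((\<lambda>t. (sin t)^2) has_real_derivative (2 * sin t * cos t)) (at t)" for t
    by (auto intro!: derivative_eq_intros)
  have qd: "(q has_derivative (\<lambda>h. (h * (2 * sin t * cos t)) *\<^sub>R d)) (at t)" for t
  proof -
    have "((\<lambda>t. (sin t)^2) has_derivative (\<lambda>h. h * (2 * sin t * cos t))) (at t)"
      using sd[of t] unfolding has_field_derivative_def
      by (rule has_derivative_eq_rhs) (auto simp: mult.commute)
    then have "((\<lambda>t. (sin t)^2 *\<^sub>R d) has_derivative (\<lambda>h. (h * (2 * sin t * cos t)) *\<^sub>R d)) (at t)"
      by (rule has_derivative_scaleR_left)
    then show ?thesis unfolding q_def
      by (rule has_derivative_eq_rhs[OF has_derivative_add[OF has_derivative_const]]) simp
  qed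
  have hd: "((f \<circ> q) has_real_derivative (k t * (2 * sin t * cos t))) (at t)" for t
  proof -
    have "((f \<circ> q) has_derivative (blinfun_apply (Df (q t)) \<circ> (\<lambda>h. (h * (2 * sin t * cos t)) *\<^sub>R d))) (at t)"
      using qd fD by (blast intro: diff_chain_at)
    then show ?thesis unfolding has_field_derivative_def
      by (rule has_derivative_eq_rhs) (auto simp: k_def blinfun.scaleR_right)
  qed
  have dh: "deriv (f \<circ> q) = (\<lambda>t. k t * (2 * sin t * cos t))"
    using hd by (intro ext DERIV_imp_deriv)
  have "k differentiable (at 0)"
  proof -
    have q0: "q differentiable (at 0)" using qd[of 0] unfolding differentiable_def by blast
    have "(Df \<circ> q) differentiable (at 0)" using differentiable_chain_at[OF q0] Dd by blast
    moreover have "(\<lambda>L. blinfun_apply L d) differentiable (at ((Df \<circ> q) 0))"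
      by (rule bounded_linear_imp_differentiable) (rule blinfun.bounded_linear_left)
    ultimately have "((\<lambda>L. blinfun_apply L d) \<circ> (Df \<circ> q)) differentiable (at 0)"
      by (rule differentiable_chain_at)
    then show ?thesis by (simp add: k_def o_def)
  qed
  then have kd: "(k has_real_derivative deriv k 0) (at 0)"
    by (simp add: DERIV_deriv_iff_real_differentiable)
  have "((\<lambda>t. k t * (2 * sin t * cos t)) has_real_derivative
      (deriv k 0 * (2 * sin 0 * cos 0) + (2 * cos 0 * cos 0 - 2 * sin 0 * sin 0) * k 0)) (at 0)"
    by (rule DERIV_mult[OF kd]) (auto intro!: derivative_eq_intros)
  then have "deriv (deriv (f \<circ> q)) 0 = 2 * k 0" unfolding dh
    by (simp add: DERIV_imp_deriv)
  moreover have "deriv (deriv ((f \<circ> sq_lift) \<circ> c)) 0 \<ge> 0"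
    using cr cc unfolding crit2_def by blast
  ultimately have "k 0 \<ge> 0" using hc by simp
  then show ?thesis by (simp add: k_def q_def d_def x_def)
qed

lemma two_one_all:
  fixes y :: "real^'n"
  assumes y: "y \<in> sphere 0 1"
  shows "two_one (sphere 0 1) sq_lift y"
  unfolding two_one_def
proof (intro allI impI)
  fix f :: "real^'n \<Rightarrow> real"
  assume d2: "diff2 f" and cr: "crit2 (sphere 0 1) (f \<circ> sq_lift) y"
  obtain Df :: "(real^'n) \<Rightarrow> ((real^'n) \<Rightarrow>\<^sub>L real)" where
    fD: "\<forall>x. (f has_derivative blinfun_apply (Df x)) (at x)" and Dd: "\<forall>x. Df differentiable (at x)"
    using d2 unfolding diff2_def by blast
  define x where "x = sq_lift y"
  obtain gr where fd: "(f has_derivative inner gr) (at x)" and Dg: "blinfun_apply (Df x) = inner gr"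
    using grad_of_diff[OF fD[rule_format, of x]] by blast
  have cr1: "crit1 (sphere 0 1) (f \<circ> sq_lift) y" using cr unfolding crit2_def by blast
  have xs: "x \<in> std_simplex" using y image_eq unfolding x_def by blast
  have xi: "x$i = y$i * y$i" for i by (simp add: x_def sq_lift_def)
  have "y \<noteq> 0" using y by auto
  then obtain i0 where i0: "y$i0 \<noteq> 0" by (auto simp: vec_eq_iff)
  define l where "l = gr$i0"
  have eqS: "gr$i = l" if "y$i \<noteq> 0" for i
    using crit1_eq[OF y fd[unfolded x_def] cr1 that i0] by (simp add: l_def)
  have "inner gr x = (\<Sum>i\<in>UNIV. l * x$i)" unfolding inner_vec_def inner_real_def
  proof (intro sum.cong refl)
    fix i :: 'n
    show "gr$i * x$i = l * x$i" by (cases "y$i = 0") (simp_all add: xi eqS)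
  qed
  also have "\<dots> = l" using xs by (simp add: sum_distrib_left[symmetric] std_simplex_def)
  finally have gx: "inner gr x = l" .
  have ge: "gr$j \<ge> l" if "y$j = 0" for j
  proof -
    have "blinfun_apply (Df x) (axis j 1 - x) \<ge> 0"
      using second_order[OF y that fD Dd cr] by (simp add: x_def)
    then have "inner gr (axis j 1 - x) \<ge> 0" by (simp add: Dg)
    then show ?thesis using gx by (simp add: inner_diff_right inner_axis)
  qed
  have "gr \<in> dual_cone (tangent_cone std_simplex x)"
    unfolding dual_cone_def
  proof (rule CollectI, rule ballI)
    fix v assume v: "v \<in> tangent_cone std_simplex x"
    have "(\<Sum>i\<in>UNIV. l * v$i) \<le> (\<Sum>i\<in>UNIV. gr$i * v$i)"
    proof (rule sum_mono)
      fix i :: 'n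
      show "l * v$i \<le> gr$i * v$i"
      proof (cases "y$i = 0")
        case True
        then have "v$i \<ge> 0" using tc_sub(2)[OF xs v] xi by simp
        then show ?thesis using ge[OF True] by (simp add: mult_right_mono)
      next
        case False
        then show ?thesis using eqS by simp
      qed
    qed
    moreover have "(\<Sum>i\<in>UNIV. l * v$i) = 0"
      using tc_sub(1)[OF xs v] by (simp add: sum_distrib_left[symmetric])
    ultimately show "inner gr v \<ge> 0" by (simp add: inner_vec_def)
  qed
  then show "stationary_on (sq_lift ` sphere 0 1) f (sq_lift y)"
    unfolding stationary_on_def image_eq using fd x_def by blast
qed

theorem proposition2p5:
  fixes y :: "real ^ 'n"
  assumes "y \<in> sphere 0 1"
  shows "sq_lift ` (sphere 0 1 :: (real ^ 'n) set) = std_simplex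
     \<and> local_local (sphere 0 1) sq_lift y
     \<and> (one_one (sphere 0 1) sq_lift y \<longleftrightarrow> (\<forall>i. y $ i \<noteq> 0))
     \<and> two_one (sphere 0 1) sq_lift y"
  using image_eq local_local_all[OF assms] one_one_nonzero[OF assms] one_one_zero[OF assms]
    two_one_all[OF assms] by blast

end
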